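(* Let $K$ be a field, $\boldsymbol{\lambda}=(\lambda_1,\dots,\lambda_n)$ a vector of positive integers, and $M(\boldsymbol{\lambda})$ the monoid defined below. Then $I(\boldsymbol{\lambda})\subseteq K[x_1,\dots,x_n]$ is normal if and only if every minimal generator of $M(\boldsymbol{\lambda})$ of type (3) or (4) has $d=1$.
   Context: $I(\boldsymbol{\lambda})$ is the integral closure in $R=K[x_1,\dots,x_n]$ of $(x_1^{\lambda_1},\dots,x_n^{\lambda_n})$; an ideal is normal if all its positive powers are integrally closed. Let $M(\boldsymbol{\lambda})=\{(a_1,\dots,a_n,d)\in\mathbb{N}^{n+1}\mid a_1/\lambda_1+\cdots+a_n/\lambda_n\ge d\}$ (the exponent monoid of the integral closure of the Rees algebra $R[I(\boldsymbol{\lambda})t]$ in $R[t]$). A minimal generator of $M(\boldsymbol{\lambda})$ is a nonzero element that cannot be written as the sum of two nonzero elements of $M(\boldsymbol{\lambda})$. A minimal generator $(a_1,\dots,a_n,d)$ is of type (3) if $a_n=0$, $d>0$ and $a_ia_j>0$ for some $1\le i<j<n$; it is of type (4) if $d>0$ and $a_ia_n>0$ for some $1\le i<n$. *)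

theory Defs
  imports Complex_Main "HOL-Library.Poly_Mapping"
begin

text \<open>K[x_1,...,x_n] is the subring of polynomials only involving the variables 0..n-1.\<close>

type_synonym 'k mpoly = "(nat \<Rightarrow>\<^sub>0 nat) \<Rightarrow>\<^sub>0 'k"

definition polyring :: "nat \<Rightarrow> ('k::field) mpoly set" where
  "polyring n = {p :: 'k mpoly. \<forall>m\<in>Poly_Mapping.keys p. \<forall>i\<in>Poly_Mapping.keys m. i < n}"

definition xpow :: "nat \<Rightarrow> nat \<Rightarrow> ('k::field) mpoly" where
  "xpow i e = Poly_Mapping.single (Poly_Mapping.single i e) 1"

definition ideal_gen :: "'a::comm_ring_1 set \<Rightarrow> 'a set \<Rightarrow> 'a set" where
  "ideal_gen R S = {x. \<exists>F c. finite F \<and> F \<subseteq> S \<and> (\<forall>s\<in>F. c s \<in> R) \<and> x = (\<Sum>s\<in>F. c s * s)}"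

fun ideal_pow :: "'a::comm_ring_1 set \<Rightarrow> 'a set \<Rightarrow> nat \<Rightarrow> 'a set" where
  "ideal_pow R I 0 = R"
| "ideal_pow R I (Suc k) = ideal_gen R {a * b | a b. a \<in> ideal_pow R I k \<and> b \<in> I}"

definition integral_closure :: "'a::comm_ring_1 set \<Rightarrow> 'a set \<Rightarrow> 'a set" where
  "integral_closure R I = {r \<in> R. \<exists>m\<ge>1. \<exists>a. (\<forall>i\<in>{1..m}. a i \<in> ideal_pow R I i) \<and>
      r ^ m + (\<Sum>i=1..m. a i * r ^ (m - i)) = 0}"

definition normal_ideal :: "'a::comm_ring_1 set \<Rightarrow> 'a set \<Rightarrow> bool" where
  "normal_ideal R I \<longleftrightarrow> (\<forall>k\<ge>1. integral_closure R (ideal_pow R I k) = ideal_pow R I k)"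

text \<open>I(lambda): integral closure of (x_1^lambda_1, ..., x_n^lambda_n); variable x_{i+1} is index i.\<close>
definition I_lambda :: "nat \<Rightarrow> (nat \<Rightarrow> nat) \<Rightarrow> ('k::field) mpoly set" where
  "I_lambda n lam = integral_closure (polyring n) (ideal_gen (polyring n) {xpow i (lam i) | i. i < n})"

definition M_lambda :: "nat \<Rightarrow> (nat \<Rightarrow> nat) \<Rightarrow> ((nat \<Rightarrow> nat) \<times> nat) set" where
  "M_lambda n lam = {(a, d). (\<forall>i\<ge>n. a i = 0) \<and> (\<Sum>i<n. real (a i) / real (lam i)) \<ge> real d}"

definition madd :: "(nat \<Rightarrow> nat) \<times> nat \<Rightarrow> (nat \<Rightarrow> nat) \<times> nat \<Rightarrow> (nat \<Rightarrow> nat) \<times> nat" where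
  "madd u v = ((\<lambda>i. fst u i + fst v i), snd u + snd v)"

definition mzero :: "(nat \<Rightarrow> nat) \<times> nat" where
  "mzero = ((\<lambda>i. 0), 0)"

definition min_generator :: "nat \<Rightarrow> (nat \<Rightarrow> nat) \<Rightarrow> (nat \<Rightarrow> nat) \<times> nat \<Rightarrow> bool" where
  "min_generator n lam v \<longleftrightarrow> v \<in> M_lambda n lam \<and> v \<noteq> mzero \<and>
     \<not> (\<exists>u w. u \<in> M_lambda n lam \<and> w \<in> M_lambda n lam \<and> u \<noteq> mzero \<and> w \<noteq> mzero \<and> v = madd u w)"

text \<open>Types (3) and (4); the paper's index n (last variable) is index n - 1 here.\<close>
definition gen_type3 :: "nat \<Rightarrow> (nat \<Rightarrow> nat) \<times> nat \<Rightarrow> bool" where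
  "gen_type3 n v \<longleftrightarrow> fst v (n - 1) = 0 \<and> snd v > 0 \<and>
     (\<exists>i j. i < j \<and> j < n - 1 \<and> fst v i * fst v j > 0)"

definition gen_type4 :: "nat \<Rightarrow> (nat \<Rightarrow> nat) \<times> nat \<Rightarrow> bool" where
  "gen_type4 n v \<longleftrightarrow> snd v > 0 \<and> (\<exists>i < n - 1. fst v i * fst v (n - 1) > 0)"

end

theory Submission
  imports Defs
begin


definition subr :: "'a::comm_ring_1 set \<Rightarrow> bool" where
  "subr R \<longleftrightarrow> 0 \<in> R \<and> 1 \<in> R \<and> (\<forall>x\<in>R. \<forall>y\<in>R. x + y \<in> R \<and> x * y \<in> R \<and> - x \<in> R)"

definition idl :: "'a::comm_ring_1 set \<Rightarrow> 'a set \<Rightarrow> bool" where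
  "idl R T \<longleftrightarrow> T \<subseteq> R \<and> 0 \<in> T \<and> (\<forall>x\<in>T. \<forall>y\<in>T. x + y \<in> T) \<and> (\<forall>r\<in>R. \<forall>x\<in>T. r * x \<in> T)"

lemma idl_sum: assumes "idl R T" "finite F" "\<forall>x\<in>F. f x \<in> T" shows "sum f F \<in> T"
  using assms(2,3) by (induction F rule: finite_induct) (use assms(1) in \<open>auto simp: idl_def\<close>)

lemma idl_neg: "subr R \<Longrightarrow> idl R T \<Longrightarrow> x \<in> T \<Longrightarrow> - x \<in> T"
proof -
  assume a: "subr R" "idl R T" "x \<in> T"
  have "- 1 \<in> R" using a(1) unfolding subr_def by blast
  then have "(- 1) * x \<in> T" using a unfolding idl_def by blast
  then show ?thesis by simp
qed

lemma subr_idl: "subr R \<Longrightarrow> idl R R"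
  unfolding subr_def idl_def by blast

lemma gen_least:
  assumes "idl R T" "S \<subseteq> T"
  shows "ideal_gen R S \<subseteq> T"
proof
  fix x assume "x \<in> ideal_gen R S"
  then obtain F c where F: "finite F" "F \<subseteq> S" "\<forall>s\<in>F. c s \<in> R" "x = (\<Sum>s\<in>F. c s * s)"
    unfolding ideal_gen_def by blast
  have "\<forall>s\<in>F. c s * s \<in> T" using F assms unfolding idl_def by blast
  then show "x \<in> T" using idl_sum[OF assms(1) F(1)] F(4) by simp
qed

lemma gen_mem: "subr R \<Longrightarrow> s \<in> S \<Longrightarrow> s \<in> ideal_gen R S"
  unfolding ideal_gen_def subr_def
  by (rule CollectI, rule exI[of _ "{s}"], rule exI[of _ "\<lambda>_. 1"]) auto

lemma idl_gen:
  assumes "subr R" "S \<subseteq> R"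
  shows "idl R (ideal_gen R S)"
  unfolding idl_def
proof (intro conjI ballI)
  have "idl R R" using subr_idl[OF assms(1)] .
  then show "ideal_gen R S \<subseteq> R" using gen_least assms by blast
  show "0 \<in> ideal_gen R S" unfolding ideal_gen_def
    by (rule CollectI, rule exI[of _ "{}"]) auto
next
  fix x y assume "x \<in> ideal_gen R S" "y \<in> ideal_gen R S"
  then obtain F1 c1 F2 c2 where F: "finite F1" "F1 \<subseteq> S" "\<forall>s\<in>F1. c1 s \<in> R" "x = (\<Sum>s\<in>F1. c1 s * s)"
     "finite F2" "F2 \<subseteq> S" "\<forall>s\<in>F2. c2 s \<in> R" "y = (\<Sum>s\<in>F2. c2 s * s)"
    unfolding ideal_gen_def by blast
  define c where "c s = (if s \<in> F1 then c1 s else 0) + (if s \<in> F2 then c2 s else 0)" for s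
  have "(\<Sum>s\<in>F1 \<union> F2. c s * s) = (\<Sum>s\<in>F1 \<union> F2. (if s \<in> F1 then c1 s * s else 0)) + (\<Sum>s\<in>F1 \<union> F2. (if s \<in> F2 then c2 s * s else 0))"
    unfolding c_def sum.distrib[symmetric] by (rule sum.cong) (auto simp: distrib_right)
  also have "\<dots> = x + y" using F
    by (simp add: sum.If_cases Int_absorb1)
  finally have e: "x + y = (\<Sum>s\<in>F1 \<union> F2. c s * s)" by simp
  have "\<forall>s\<in>F1 \<union> F2. c s \<in> R" using F assms(1) unfolding c_def subr_def by auto
  then show "x + y \<in> ideal_gen R S" unfolding ideal_gen_def using F e
    by (intro CollectI exI[of _ "F1 \<union> F2"] exI[of _ c]) auto
next
  fix r x assume r: "r \<in> R" and "x \<in> ideal_gen R S"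
  then obtain F c where F: "finite F" "F \<subseteq> S" "\<forall>s\<in>F. c s \<in> R" "x = (\<Sum>s\<in>F. c s * s)"
    unfolding ideal_gen_def by blast
  have "r * x = (\<Sum>s\<in>F. (r * c s) * s)" using F by (simp add: sum_distrib_left mult.assoc)
  moreover have "\<forall>s\<in>F. r * c s \<in> R" using F r assms(1) unfolding subr_def by auto
  ultimately show "r * x \<in> ideal_gen R S" unfolding ideal_gen_def using F
    by (intro CollectI exI[of _ F] exI[of _ "\<lambda>s. r * c s"]) auto
qed

lemma idl_pow:
  assumes "subr R" "I \<subseteq> R"
  shows "idl R (ideal_pow R I k)"
proof (induction k)
  case 0 then show ?case using subr_idl[OF assms(1)] by simp
next
  case (Suc k)
  have "{a * b | a b. a \<in> ideal_pow R I k \<and> b \<in> I} \<subseteq> R"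
    using Suc assms unfolding idl_def subr_def by blast
  then show ?case using idl_gen[OF assms(1)] by simp
qed

lemma pow_mult:
  assumes "subr R" "a \<in> ideal_pow R I k" "b \<in> I"
  shows "a * b \<in> ideal_pow R I (Suc k)"
  using assms by (simp, intro gen_mem) blast+



abbreviation lk :: "('a \<Rightarrow>\<^sub>0 'b::zero) \<Rightarrow> 'a \<Rightarrow> 'b" where "lk \<equiv> Poly_Mapping.lookup"
abbreviation ks :: "('a \<Rightarrow>\<^sub>0 'b::zero) \<Rightarrow> 'a set" where "ks \<equiv> Poly_Mapping.keys"


lemma lookup_mult_pairs:
  "lk (f * g) k = (\<Sum>(a, b). lk f a * lk g b when k = a + b)"
  by transfer (simp add: prod_fun_unfold_prod)

lemma val_mult:
  fixes f g :: "('k::field) mpoly" and W :: "(nat \<Rightarrow>\<^sub>0 nat) \<Rightarrow> nat"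
  assumes Wadd: "\<And>x y. W (x + y) = W x + W y"
    and f1: "\<forall>b\<in>ks f. s \<le> W b" and f2: "\<exists>b\<in>ks f. W b = s"
    and g1: "\<forall>b\<in>ks g. t \<le> W b" and g2: "\<exists>b\<in>ks g. W b = t"
  shows "\<exists>c\<in>ks (f * g). W c = s + t"
proof -
  define F0 where "F0 = {a \<in> ks f. W a = s}"
  define G0 where "G0 = {a \<in> ks g. W a = t}"
  have finF: "finite F0" "F0 \<noteq> {}" using f2 unfolding F0_def by (auto simp: finite_keys)
  have finG: "finite G0" "G0 \<noteq> {}" using g2 unfolding G0_def by (auto simp: finite_keys)
  define a0 where "a0 = Max F0"
  define b0 where "b0 = Max G0"
  have a0: "a0 \<in> F0" "\<And>a. a \<in> F0 \<Longrightarrow> a \<le> a0" using finF unfolding a0_def by auto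
  have b0: "b0 \<in> G0" "\<And>a. a \<in> G0 \<Longrightarrow> a \<le> b0" using finG unfolding b0_def by auto
  have "lk (f * g) (a0 + b0) = (\<Sum>(a, b). lk f a * lk g b when a0 + b0 = a + b)"
    by (rule lookup_mult_pairs)
  also have "\<dots> = (\<Sum>ab. (lk f a0 * lk g b0) when ab = (a0, b0))"
  proof (rule Sum_any.cong)
    fix ab :: "(nat \<Rightarrow>\<^sub>0 nat) \<times> (nat \<Rightarrow>\<^sub>0 nat)"
    obtain a b where ab: "ab = (a, b)" by (cases ab)
    show "(case ab of (a, b) \<Rightarrow> lk f a * lk g b when a0 + b0 = a + b) =
          (lk f a0 * lk g b0 when ab = (a0, b0))"
    proof (cases "ab = (a0, b0)")
      case True then show ?thesis by (simp add: when_def)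
    next
      case False
      have "lk f a * lk g b = 0" if e: "a0 + b0 = a + b"
      proof (rule ccontr)
        assume "lk f a * lk g b \<noteq> 0"
        then have ak: "a \<in> ks f" and bk: "b \<in> ks g" by (auto simp: in_keys_iff)
        have "W a0 + W b0 = W a + W b" using e Wadd by metis
        moreover have "W a0 = s" "W b0 = t" using a0 b0 unfolding F0_def G0_def by auto
        moreover have "s \<le> W a" "t \<le> W b" using ak bk f1 g1 by auto
        ultimately have "a \<in> F0" "b \<in> G0" using ak bk unfolding F0_def G0_def by auto
        then have le: "a \<le> a0" "b \<le> b0" using a0 b0 by auto
        have "a \<noteq> a0 \<or> b \<noteq> b0" using False ab by auto
        then have "a + b < a0 + b0"
          using le by (auto intro: add_less_le_mono add_le_less_mono simp: order.order_iff_strict)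
        then show False using e by simp
      qed
      then show ?thesis using False ab by (auto simp: when_def)
    qed
  qed
  also have "\<dots> = lk f a0 * lk g b0" by simp
  also have "\<dots> \<noteq> 0" using a0 b0 unfolding F0_def G0_def by (auto simp: in_keys_iff)
  finally have "a0 + b0 \<in> ks (f * g)" by (simp add: in_keys_iff)
  moreover have "W (a0 + b0) = s + t" using Wadd a0 b0 unfolding F0_def G0_def by auto
  ultimately show ?thesis by blast
qed



lemma ks_uminus [simp]: "ks (- (p::'k::ab_group_add mpoly)) = ks p"
  by (auto simp: in_keys_iff)

lemma ks_sum_sub: "finite F \<Longrightarrow> ks (sum (f :: 'x \<Rightarrow> ('k::comm_monoid_add) mpoly) F) \<subseteq> (\<Union>i\<in>F. ks (f i))"
proof (induction F rule: finite_induct)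
  case (insert x F)
  then show ?case using keys_add[of "f x" "sum f F"] by auto
qed simp

lemma subr_poly: "subr (polyring n :: ('k::field) mpoly set)"
proof -
  have add: "x + y \<in> polyring n" if x: "x \<in> polyring n" and y: "y \<in> polyring n" for x y :: "'k mpoly"
    using x y keys_add[of x y] unfolding polyring_def by blast
  have mul: "x * y \<in> polyring n" if x: "x \<in> polyring n" and y: "y \<in> polyring n" for x y :: "'k mpoly"
    unfolding polyring_def
  proof (intro CollectI ballI)
    fix m i assume "m \<in> ks (x * y)" "i \<in> ks m"
    then obtain a b where "m = a + b" "a \<in> ks x" "b \<in> ks y" using keys_mult[of x y] by blast
    then show "i < n" using x y keys_add[of a b] \<open>i \<in> ks m\<close> unfolding polyring_def by blast
  qed
  have neg: "- x \<in> polyring n" if x: "x \<in> polyring n" for x :: "'k mpoly"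
    using x unfolding polyring_def by simp
  have "0 \<in> (polyring n :: 'k mpoly set)" "1 \<in> (polyring n :: 'k mpoly set)" unfolding polyring_def by auto
  then show ?thesis using add mul neg unfolding subr_def by blast
qed

definition wsum :: "nat \<Rightarrow> (nat \<Rightarrow> nat) \<Rightarrow> (nat \<Rightarrow> nat) \<Rightarrow> nat" where
  "wsum n wt a = (\<Sum>i<n. a i * wt i)"

lemma wsum_add: "wsum n wt (lk (x + y)) = wsum n wt (lk x) + wsum n wt (lk y)"
  unfolding wsum_def by (simp add: lookup_add sum.distrib distrib_right)

lemma wsum_zero [simp]: "wsum n wt (lk 0) = 0"
  unfolding wsum_def by (simp add: zero_poly_mapping.rep_eq)

definition Pw :: "nat \<Rightarrow> (nat \<Rightarrow> nat) \<Rightarrow> nat \<Rightarrow> ('k::field) mpoly set" where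
  "Pw n wt t = {f \<in> polyring n. \<forall>b\<in>ks f. t \<le> wsum n wt (lk b)}"

lemma Pw_mult:
  assumes "f \<in> Pw n wt s" "g \<in> Pw n wt t"
  shows "f * g \<in> Pw n wt (s + t)"
proof -
  have "f * g \<in> polyring n" using assms subr_poly unfolding Pw_def subr_def by blast
  moreover have "\<forall>b\<in>ks (f * g). s + t \<le> wsum n wt (lk b)"
  proof
    fix b assume "b \<in> ks (f * g)"
    then obtain x y where "b = x + y" "x \<in> ks f" "y \<in> ks g" using keys_mult[of f g] by blast
    then show "s + t \<le> wsum n wt (lk b)" using assms unfolding Pw_def by (auto simp: wsum_add add_mono)
  qed
  ultimately show ?thesis unfolding Pw_def by blast
qed

lemma Pw_zero: "Pw n wt 0 = polyring n"
  unfolding Pw_def by auto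

lemma idl_Pw: "idl (polyring n) (Pw n wt t :: ('k::field) mpoly set)"
  unfolding idl_def
proof (intro conjI ballI)
  show "Pw n wt t \<subseteq> polyring n" unfolding Pw_def by blast
  show "0 \<in> Pw n wt t" using subr_poly unfolding Pw_def subr_def by auto
next
  fix x y :: "'k mpoly" assume "x \<in> Pw n wt t" "y \<in> Pw n wt t"
  then show "x + y \<in> Pw n wt t" using subr_poly keys_add[of x y] unfolding Pw_def subr_def by blast
next
  fix r x :: "'k mpoly" assume "r \<in> polyring n" "x \<in> Pw n wt t"
  then have "r \<in> Pw n wt 0" "x \<in> Pw n wt t" by (simp_all add: Pw_def)
  then show "r * x \<in> Pw n wt t" using Pw_mult[of r n wt 0 x t] by simp
qed

lemma pow_Pw:
  assumes "J \<subseteq> Pw n wt t"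
  shows "ideal_pow (polyring n) J k \<subseteq> Pw n wt (k * t)"
proof (induction k)
  case 0 then show ?case by (auto simp: Pw_def)
next
  case (Suc k)
  have "{a * b |a b. a \<in> ideal_pow (polyring n) J k \<and> b \<in> J} \<subseteq> Pw n wt (Suc k * t)"
    using Suc assms Pw_mult[of _ n wt "k * t" _ t] by (auto simp: add.commute)
  then show ?case using gen_least[OF idl_Pw] by simp
qed

lemma pow_keys:
  fixes r :: "('k::field) mpoly"
  assumes r1: "\<forall>b\<in>ks r. w \<le> wsum n wt (lk b)" and r2: "\<exists>b\<in>ks r. wsum n wt (lk b) = w"
  shows "(\<forall>b\<in>ks (r ^ j). j * w \<le> wsum n wt (lk b)) \<and> (\<exists>b\<in>ks (r ^ j). wsum n wt (lk b) = j * w)"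
proof (induction j)
  case 0 then show ?case by (simp add: wsum_def)
next
  case (Suc j)
  have "\<forall>b\<in>ks (r ^ j * r). j * w + w \<le> wsum n wt (lk b)"
  proof
    fix b assume "b \<in> ks (r ^ j * r)"
    then obtain x y where "b = x + y" "x \<in> ks (r ^ j)" "y \<in> ks r" using keys_mult[of "r ^ j" r] by blast
    then show "j * w + w \<le> wsum n wt (lk b)" using Suc r1 by (auto simp: wsum_add add_mono)
  qed
  moreover have "\<exists>b\<in>ks (r ^ j * r). wsum n wt (lk b) = j * w + w"
    using val_mult[of "\<lambda>b. wsum n wt (lk b)" "r ^ j" "j * w" r w] Suc r1 r2 wsum_add by blast
  ultimately show ?case by (simp only: power_Suc2 mult_Suc add.commute)
qed

lemma valuation:
  fixes r :: "('k::field) mpoly"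
  assumes r: "r \<in> polyring n" and m: "m \<ge> 1"
    and a: "\<forall>i\<in>{1..m}. a i \<in> Pw n wt (i * t)"
    and eq: "r ^ m + (\<Sum>i=1..m. a i * r ^ (m - i)) = 0"
  shows "r \<in> Pw n wt t"
proof (rule ccontr)
  assume nr: "r \<notin> Pw n wt t"
  then obtain b0 where b0: "b0 \<in> ks r" "wsum n wt (lk b0) < t" using r unfolding Pw_def by force
  define w where "w = Min ((\<lambda>b. wsum n wt (lk b)) ` ks r)"
  have fin: "finite ((\<lambda>b. wsum n wt (lk b)) ` ks r)" by (simp add: finite_keys)
  have r1: "\<forall>b\<in>ks r. w \<le> wsum n wt (lk b)" unfolding w_def using fin by auto
  have r2: "\<exists>b\<in>ks r. wsum n wt (lk b) = w" unfolding w_def using fin b0(1)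
    by (metis (no_types, lifting) Min_in empty_iff image_iff)
  have wt: "w < t" using r1 b0 by fastforce
  obtain c where c: "c \<in> ks (r ^ m)" "wsum n wt (lk c) = m * w" using pow_keys[OF r1 r2, of m] by blast
  have terms: "\<forall>b\<in>ks (a i * r ^ (m - i)). m * w < wsum n wt (lk b)" if i: "i \<in> {1..m}" for i
  proof
    fix b assume "b \<in> ks (a i * r ^ (m - i))"
    then obtain x y where xy: "b = x + y" "x \<in> ks (a i)" "y \<in> ks (r ^ (m - i))"
      using keys_mult[of "a i" "r ^ (m - i)"] by blast
    have "i * t \<le> wsum n wt (lk x)" using a i xy unfolding Pw_def by auto
    moreover have "(m - i) * w \<le> wsum n wt (lk y)" using pow_keys[OF r1 r2, of "m - i"] xy by auto
    moreover have "m * w < i * t + (m - i) * w"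
    proof -
      have "i * w < i * t" using i wt by auto
      moreover have "m * w = i * w + (m - i) * w" using i by (simp add: add_mult_distrib[symmetric])
      ultimately show ?thesis by linarith
    qed
    ultimately show "m * w < wsum n wt (lk b)" using xy wsum_add by fastforce
  qed
  have "ks (\<Sum>i=1..m. a i * r ^ (m - i)) \<subseteq> (\<Union>i\<in>{1..m}. ks (a i * r ^ (m - i)))"
    by (rule ks_sum_sub) simp
  then have "c \<notin> ks (\<Sum>i=1..m. a i * r ^ (m - i))" using terms c by fastforce
  then have "lk (\<Sum>i=1..m. a i * r ^ (m - i)) c = 0" by (simp add: in_keys_iff)
  moreover have "lk (r ^ m) c \<noteq> 0" using c by (simp add: in_keys_iff)
  ultimately have "lk (r ^ m + (\<Sum>i=1..m. a i * r ^ (m - i))) c \<noteq> 0" by (simp add: lookup_add)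
  then show False using eq by simp
qed

lemma closure_Pw:
  assumes "J \<subseteq> Pw n wt t"
  shows "integral_closure (polyring n) J \<subseteq> Pw n wt t"
proof
  fix r assume "r \<in> integral_closure (polyring n) J"
  then obtain m a where "r \<in> polyring n" "m \<ge> 1" "\<forall>i\<in>{1..m}. a i \<in> ideal_pow (polyring n) J i"
    "r ^ m + (\<Sum>i=1..m. a i * r ^ (m - i)) = 0" unfolding integral_closure_def by blast
  then show "r \<in> Pw n wt t" using valuation[of r n m a wt t] pow_Pw[OF assms] by blast
qed



definition fz :: "nat \<Rightarrow> (nat \<Rightarrow> nat) \<Rightarrow> bool" where
  "fz n a \<longleftrightarrow> (\<forall>i\<ge>n. a i = 0)"

definition mon :: "(nat \<Rightarrow> nat) \<Rightarrow> ('k::field) mpoly" where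
  "mon a = Poly_Mapping.single (Abs_poly_mapping a) 1"

lemma fz_fin: "fz n a \<Longrightarrow> finite {i. a i \<noteq> 0}"
  unfolding fz_def by (rule finite_subset[of _ "{..<n}"]) (auto simp: not_less[symmetric])

lemma lk_pm: "fz n a \<Longrightarrow> lk (Abs_poly_mapping a) = a"
  using fz_fin by simp

lemma mon_R: "fz n a \<Longrightarrow> mon a \<in> polyring n"
  unfolding polyring_def mon_def using lk_pm[of n a] by (auto simp: in_keys_iff fz_def not_less[symmetric])

lemma ks_mon [simp]: "ks (mon a :: ('k::field) mpoly) = {Abs_poly_mapping a}"
  unfolding mon_def by simp

lemma fz_add: "fz n a \<Longrightarrow> fz n c \<Longrightarrow> fz n (\<lambda>i. a i + c i)"
  unfolding fz_def by auto

lemma mon_mult: "fz n a \<Longrightarrow> fz n c \<Longrightarrow> (mon a * mon c :: ('k::field) mpoly) = mon (\<lambda>i. a i + c i)"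
proof -
  assume a: "fz n a" "fz n c"
  have "Abs_poly_mapping a + Abs_poly_mapping c = Abs_poly_mapping (\<lambda>i. a i + c i)"
    by (rule poly_mapping_eqI) (simp add: lookup_add lk_pm[OF a(1)] lk_pm[OF a(2)] lk_pm[OF fz_add[OF a]])
  then show ?thesis unfolding mon_def mult_single by simp
qed

lemma mon_pow: "fz n a \<Longrightarrow> (mon a ^ k :: ('k::field) mpoly) = mon (\<lambda>i. k * a i)"
proof (induction k)
  case 0 then show ?case unfolding mon_def by simp
next
  case (Suc k)
  have "fz n (\<lambda>i. k * a i)" using Suc.prems unfolding fz_def by auto
  then show ?case using Suc mon_mult[of n "\<lambda>i. k * a i" a] by (simp add: power_Suc2 add.commute mult.commute)
qed

definition ev :: "nat \<Rightarrow> nat \<Rightarrow> nat \<Rightarrow> nat" where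
  "ev i e = (\<lambda>_. 0)(i := e)"

lemma fz_ev: "i < n \<Longrightarrow> fz n (ev i e)"
  unfolding fz_def ev_def by auto

lemma xpow_mon: "xpow i e = mon (ev i e)"
  unfolding xpow_def mon_def ev_def
  by (rule arg_cong[where f = "\<lambda>x. Poly_Mapping.single x 1"], rule poly_mapping_eqI)
     (simp add: lookup_single when_def)

lemma wsum_mon: "fz n a \<Longrightarrow> wsum n wt (lk (Abs_poly_mapping a)) = wsum n wt a"
  by (simp add: lk_pm)

lemma lemD:
  assumes gen: "\<forall>i<n. (mon (ev i (t i)) :: ('k::field) mpoly) \<in> J"
  shows "\<forall>b q. fz n b \<longrightarrow> (\<forall>i<n. b i = q i * t i) \<longrightarrow> m \<le> (\<Sum>i<n. q i) \<longrightarrow>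
           (mon b :: 'k mpoly) \<in> ideal_pow (polyring n) J m"
proof (induction m)
  case 0 then show ?case using mon_R by auto
next
  case (Suc m)
  show ?case
  proof (intro allI impI)
    fix b q assume b: "fz n b" and bq: "\<forall>i<n. b i = q i * t i" and qs: "Suc m \<le> (\<Sum>i<n. q i)"
    obtain i where i: "i < n" "q i > 0"
    proof (rule ccontr)
      assume "\<not> ?thesis"
      then have "\<forall>i<n. q i = 0" using that by auto
      then show False using qs by simp
    qed
    define b' where "b' = b(i := b i - t i)"
    define q' where "q' = q(i := q i - 1)"
    have fb': "fz n b'" using b unfolding fz_def b'_def by auto
    have bq': "\<forall>j<n. b' j = q' j * t j" using bq unfolding b'_def q'_def by (auto simp: diff_mult_distrib)
    have "(\<Sum>j<n. q j) = (\<Sum>j<n. q' j + (if j = i then 1 else 0))"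
      by (rule sum.cong) (use i in \<open>auto simp: q'_def\<close>)
    also have "\<dots> = (\<Sum>j<n. q' j) + 1" using i by (simp add: sum.distrib)
    finally have qs': "m \<le> (\<Sum>j<n. q' j)" using qs by simp
    have "mon b' \<in> ideal_pow (polyring n) J m" using Suc.IH fb' bq' qs' by blast
    moreover have "b i \<ge> t i" using bq i by auto
    then have e: "(\<lambda>j. b' j + ev i (t i) j) = b" by (auto simp: b'_def ev_def)
    have "mon b' * mon (ev i (t i)) = (mon b :: 'k mpoly)"
      using mon_mult[OF fb' fz_ev[OF i(1)], of "t i"] e by simp
    ultimately show "mon b \<in> ideal_pow (polyring n) J (Suc m)"
      using pow_mult[OF subr_poly] gen i by metis
  qed
qed



definition LL :: "nat \<Rightarrow> (nat \<Rightarrow> nat) \<Rightarrow> nat" where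
  "LL n lam = (\<Prod>i<n. lam i)"

definition WT :: "nat \<Rightarrow> (nat \<Rightarrow> nat) \<Rightarrow> nat \<Rightarrow> nat" where
  "WT n lam i = LL n lam div lam i"

definition J0 :: "nat \<Rightarrow> (nat \<Rightarrow> nat) \<Rightarrow> ('k::field) mpoly set" where
  "J0 n lam = ideal_gen (polyring n) {xpow i (lam i) | i. i < n}"

context
  fixes n :: nat and lam :: "nat \<Rightarrow> nat"
  assumes pos: "\<forall>i<n. 0 < lam i"
begin

lemma LL_pos: "LL n lam > 0"
  unfolding LL_def using pos by (simp add: prod_pos)

lemma wt_mul: "i < n \<Longrightarrow> lam i * WT n lam i = LL n lam"
  unfolding WT_def LL_def by (simp add: dvd_prodI)

lemma real_wsum: "real (wsum n (WT n lam) a) = real (LL n lam) * (\<Sum>i<n. real (a i) / real (lam i))"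
proof -
  have "real (wsum n (WT n lam) a) = (\<Sum>i<n. real (a i) * real (WT n lam i))"
    unfolding wsum_def by simp
  also have "\<dots> = (\<Sum>i<n. real (LL n lam) * (real (a i) / real (lam i)))"
  proof (rule sum.cong)
    fix i assume "i \<in> {..<n}"
    then have "real (lam i) * real (WT n lam i) = real (LL n lam)" "real (lam i) > 0"
      using wt_mul[of i] pos by (simp_all flip: of_nat_mult)
    then show "real (a i) * real (WT n lam i) = real (LL n lam) * (real (a i) / real (lam i))"
      by (simp add: field_simps)
  qed simp
  finally show ?thesis by (simp add: sum_distrib_left)
qed

lemma M_iff: "(a, d) \<in> M_lambda n lam \<longleftrightarrow> fz n a \<and> d * LL n lam \<le> wsum n (WT n lam) a"
proof -
  have L: "real (LL n lam) > 0" using LL_pos by simp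
  have "(real d \<le> (\<Sum>i<n. real (a i) / real (lam i))) \<longleftrightarrow>
        real (LL n lam) * real d \<le> real (LL n lam) * (\<Sum>i<n. real (a i) / real (lam i))"
    using L by simp
  also have "\<dots> \<longleftrightarrow> d * LL n lam \<le> wsum n (WT n lam) a"
    unfolding real_wsum[symmetric] by (simp flip: of_nat_mult add: mult.commute)
  finally show ?thesis unfolding M_lambda_def fz_def by auto
qed

lemma J0_R: "J0 n lam \<subseteq> (polyring n :: ('k::field) mpoly set)"
proof -
  have "{xpow i (lam i) | i. i < n} \<subseteq> (polyring n :: 'k mpoly set)"
  proof clarify
    fix i assume i: "i < n"
    show "xpow i (lam i) \<in> (polyring n :: 'k mpoly set)" unfolding xpow_mon by (rule mon_R[OF fz_ev[OF i]])
  qed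
  then show ?thesis unfolding J0_def by (rule gen_least[OF subr_idl[OF subr_poly]])
qed

lemma gen_J0:
  assumes i: "i < n" shows "(mon (ev i (lam i)) :: ('k::field) mpoly) \<in> J0 n lam"
proof -
  have "xpow i (lam i) \<in> {xpow i (lam i) :: 'k mpoly | i. i < n}" using i by blast
  then have "xpow i (lam i) \<in> (J0 n lam :: 'k mpoly set)" unfolding J0_def by (rule gen_mem[OF subr_poly])
  then show ?thesis by (simp add: xpow_mon)
qed

lemma J0_Pw: "J0 n lam \<subseteq> (Pw n (WT n lam) (LL n lam) :: ('k::field) mpoly set)"
  unfolding J0_def
proof (rule gen_least[OF idl_Pw])
  show "{xpow i (lam i) |i. i < n} \<subseteq> (Pw n (WT n lam) (LL n lam) :: 'k mpoly set)"
  proof clarify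
    fix i assume i: "i < n"
    have "wsum n (WT n lam) (ev i (lam i)) = lam i * WT n lam i"
    proof -
      have "wsum n (WT n lam) (ev i (lam i)) = (\<Sum>ia<n. if ia = i then lam i * WT n lam i else 0)"
        unfolding wsum_def ev_def by (rule sum.cong) auto
      then show ?thesis using i by simp
    qed
    then show "xpow i (lam i) \<in> (Pw n (WT n lam) (LL n lam) :: 'k mpoly set)"
      unfolding xpow_mon Pw_def using mon_R[OF fz_ev[OF i]] wt_mul[OF i] lk_pm[OF fz_ev[OF i]] by simp
  qed
qed

lemma I_Pw: "I_lambda n lam \<subseteq> (Pw n (WT n lam) (LL n lam) :: ('k::field) mpoly set)"
  unfolding I_lambda_def using closure_Pw[OF J0_Pw] unfolding J0_def .

lemma I_R: "I_lambda n lam \<subseteq> (polyring n :: ('k::field) mpoly set)"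
  unfolding I_lambda_def integral_closure_def by blast

lemma lemA:
  assumes b: "fz n b" and w: "LL n lam \<le> wsum n (WT n lam) b"
  shows "(mon b :: ('k::field) mpoly) \<in> I_lambda n lam"
proof -
  let ?L = "LL n lam"
  let ?R = "polyring n :: 'k mpoly set"
  have gen: "\<forall>i<n. (mon (ev i (lam i)) :: 'k mpoly) \<in> J0 n lam"
    by (intro allI impI gen_J0)
  have D: "\<forall>b q. fz n b \<longrightarrow> (\<forall>i<n. b i = q i * lam i) \<longrightarrow> ?L \<le> (\<Sum>i<n. q i) \<longrightarrow>
           (mon b :: 'k mpoly) \<in> ideal_pow ?R (J0 n lam) ?L"
    by (rule lemD[OF gen])
  have f1: "fz n (\<lambda>i. ?L * b i)" using b unfolding fz_def by auto
  have f2: "\<forall>i<n. ?L * b i = (b i * WT n lam i) * lam i"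
  proof (intro allI impI)
    fix i assume i: "i < n"
    have "?L * b i = (lam i * WT n lam i) * b i" using wt_mul[OF i] by simp
    then show "?L * b i = (b i * WT n lam i) * lam i" by (simp add: ac_simps)
  qed
  have f3: "?L \<le> (\<Sum>i<n. b i * WT n lam i)" using w unfolding wsum_def .
  have Lb: "(mon (\<lambda>i. ?L * b i) :: 'k mpoly) \<in> ideal_pow ?R (J0 n lam) ?L"
    using D[rule_format, of "\<lambda>i. ?L * b i" "\<lambda>i. b i * WT n lam i"] f1 f2 f3 by blast
  define a where "a i = (if i = ?L then - mon (\<lambda>i. ?L * b i) else (0 :: 'k mpoly))" for i
  have idl: "idl ?R (ideal_pow ?R (J0 n lam) i)" for i using idl_pow[OF subr_poly J0_R] .
  have A: "\<forall>i\<in>{1..?L}. a i \<in> ideal_pow ?R (J0 n lam) i"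
  proof
    fix i assume "i \<in> {1..?L}"
    show "a i \<in> ideal_pow ?R (J0 n lam) i"
    proof (cases "i = ?L")
      case True then show ?thesis unfolding a_def using idl_neg[OF subr_poly idl Lb] by simp
    next
      case False then show ?thesis unfolding a_def using idl[of i] unfolding idl_def by simp
    qed
  qed
  have E: "(mon b :: 'k mpoly) ^ ?L + (\<Sum>i=1..?L. a i * mon b ^ (?L - i)) = 0"
  proof -
    have "(\<Sum>i=1..?L. a i * mon b ^ (?L - i)) = (\<Sum>i=1..?L. (if i = ?L then - mon (\<lambda>i. ?L * b i) else 0))"
      by (rule sum.cong) (auto simp: a_def)
    also have "\<dots> = - mon (\<lambda>i. ?L * b i)" using LL_pos by simp
    finally show ?thesis using mon_pow[OF b] by simp
  qed
  have "mon b \<in> ?R" using mon_R[OF b] .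
  moreover have "1 \<le> ?L" using LL_pos by simp
  ultimately have "mon b \<in> integral_closure ?R (J0 n lam)"
    unfolding integral_closure_def using A E by blast
  then show ?thesis unfolding I_lambda_def J0_def .
qed

end


lemma wsum_addf: "wsum n wt (\<lambda>i. a i + c i) = wsum n wt a + wsum n wt c"
  unfolding wsum_def by (simp add: sum.distrib distrib_right)

lemma wsum_single:
  assumes "i < n" "\<forall>j<n. j \<noteq> i \<longrightarrow> a j = 0"
  shows "wsum n wt a = a i * wt i"
proof -
  have "wsum n wt a = (\<Sum>j<n. if j = i then a i * wt i else 0)"
    unfolding wsum_def by (rule sum.cong) (use assms in auto)
  then show ?thesis using assms by simp
qed

lemma wsum_ev: "i < n \<Longrightarrow> wsum n wt (ev i e) = e * wt i"
proof -
  assume i: "i < n"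
  have "wsum n wt (ev i e) = ev i e i * wt i" by (rule wsum_single[OF i]) (auto simp: ev_def)
  then show ?thesis by (simp add: ev_def)
qed

lemma fz_key: "f \<in> polyring n \<Longrightarrow> b \<in> ks f \<Longrightarrow> fz n (lk b)"
  unfolding fz_def
proof (intro allI impI)
  fix i assume f: "f \<in> polyring n" and b: "b \<in> ks f" and i: "n \<le> i"
  show "lk b i = 0"
  proof (rule ccontr)
    assume "lk b i \<noteq> 0"
    then have "i \<in> ks b" by (simp add: in_keys_iff)
    moreover from f have "\<forall>m\<in>ks f. \<forall>i\<in>ks m. i < n" unfolding polyring_def by simp
    ultimately have "i < n" using b by blast
    then show False using i by simp
  qed
qed

lemma integ:
  fixes r :: "('k::field) mpoly"
  assumes J: "J \<subseteq> polyring n" and r: "r \<in> polyring n" and m: "m \<ge> 1"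
    and rm: "r ^ m \<in> ideal_pow (polyring n) J m"
  shows "r \<in> integral_closure (polyring n) J"
proof -
  let ?R = "polyring n :: 'k mpoly set"
  define a where "a i = (if i = m then - (r ^ m) else 0)" for i
  have idl: "idl ?R (ideal_pow ?R J i)" for i using idl_pow[OF subr_poly J] .
  have A: "\<forall>i\<in>{1..m}. a i \<in> ideal_pow ?R J i"
  proof
    fix i assume "i \<in> {1..m}"
    show "a i \<in> ideal_pow ?R J i"
    proof (cases "i = m")
      case True then show ?thesis unfolding a_def using idl_neg[OF subr_poly idl rm] by simp
    next
      case False then show ?thesis unfolding a_def using idl[of i] unfolding idl_def by simp
    qed
  qed
  have E: "r ^ m + (\<Sum>i=1..m. a i * r ^ (m - i)) = 0"
  proof -
    have "(\<Sum>i=1..m. a i * r ^ (m - i)) = (\<Sum>i=1..m. (if i = m then - (r ^ m) else 0))"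
      by (rule sum.cong) (auto simp: a_def)
    also have "\<dots> = - (r ^ m)" using m by simp
    finally show ?thesis by simp
  qed
  show ?thesis unfolding integral_closure_def using A E r m by blast
qed

lemma poly_expand: "(r :: ('k::field) mpoly) = (\<Sum>b\<in>ks r. Poly_Mapping.single b (lk r b))"
proof (rule poly_mapping_eqI)
  fix k
  have "lk (\<Sum>b\<in>ks r. Poly_Mapping.single b (lk r b)) k = (\<Sum>b\<in>ks r. if b = k then lk r k else 0)"
    unfolding lookup_sum by (rule sum.cong) (auto simp: lookup_single when_def)
  also have "\<dots> = lk r k" by (simp add: finite_keys in_keys_iff)
  finally show "lk r k = lk (\<Sum>b\<in>ks r. Poly_Mapping.single b (lk r b)) k" by simp
qed

lemma mon_lk: "(mon (lk b) :: ('k::field) mpoly) = Poly_Mapping.single b 1"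
  unfolding mon_def by simp

context
  fixes n :: nat and lam :: "nat \<Rightarrow> nat"
  assumes pos: "\<forall>i<n. 0 < lam i"
begin

lemma M_add: "(a, d) \<in> M_lambda n lam \<Longrightarrow> (c, e) \<in> M_lambda n lam \<Longrightarrow> (\<lambda>i. a i + c i, d + e) \<in> M_lambda n lam"
proof -
  assume a: "(a, d) \<in> M_lambda n lam" and c: "(c, e) \<in> M_lambda n lam"
  then have "fz n a" "fz n c" "d * LL n lam \<le> wsum n (WT n lam) a" "e * LL n lam \<le> wsum n (WT n lam) c"
    using M_iff[OF pos] by auto
  then have "fz n (\<lambda>i. a i + c i)" "(d + e) * LL n lam \<le> wsum n (WT n lam) (\<lambda>i. a i + c i)"
    using fz_add wsum_addf by (auto simp: add_mult_distrib)
  then show ?thesis using M_iff[OF pos] by auto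
qed

lemma WT_pos: "i < n \<Longrightarrow> WT n lam i > 0"
proof -
  assume "i < n"
  then have "lam i * WT n lam i = LL n lam" using wt_mul[OF pos] by blast
  then show ?thesis using LL_pos[OF pos] by (cases "WT n lam i") auto
qed

lemma classify:
  assumes mg: "min_generator n lam v" and d2: "snd v \<ge> 2"
  shows "gen_type3 n v \<or> gen_type4 n v"
proof (rule ccontr)
  assume nt: "\<not> (gen_type3 n v \<or> gen_type4 n v)"
  obtain a d where v: "v = (a, d)" by (cases v)
  have vM: "(a, d) \<in> M_lambda n lam" using mg v unfolding min_generator_def by simp
  then have fa: "fz n a" and wa: "d * LL n lam \<le> wsum n (WT n lam) a" using M_iff[OF pos] by auto
  have two: "\<forall>i j. i < j \<and> j < n \<longrightarrow> a i = 0 \<or> a j = 0"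
  proof (intro allI impI)
    fix i j assume ij: "i < j \<and> j < n"
    show "a i = 0 \<or> a j = 0"
    proof (rule ccontr)
      assume h: "\<not> (a i = 0 \<or> a j = 0)"
      show False
      proof (cases "j = n - 1")
        case True
        then have "gen_type4 n v" unfolding gen_type4_def v using h ij d2 v by (auto intro!: exI[of _ i])
        then show False using nt by blast
      next
        case False
        then have jn: "j < n - 1" using ij by auto
        show False
        proof (cases "a (n - 1) = 0")
          case True
          then have "gen_type3 n v" unfolding gen_type3_def using h ij jn d2 v by auto
          then show False using nt by blast
        next
          case False
          then have "gen_type4 n v" unfolding gen_type4_def using h ij jn d2 v
            by (auto intro!: exI[of _ i])
          then show False using nt by blast
        qed
      qed
    qed
  qed
  have d1: "d \<ge> 2" using d2 v by simp
  have "0 < d * LL n lam" using d1 LL_pos[OF pos] by simp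
  then have wpos: "wsum n (WT n lam) a > 0" using wa by linarith
  obtain i where i: "i < n" "a i > 0"
  proof (rule ccontr)
    assume "\<not> thesis"
    then have "\<forall>i<n. a i = 0" using that by auto
    then have "wsum n (WT n lam) a = 0" unfolding wsum_def by simp
    then show False using wpos by simp
  qed
  have oth: "\<forall>j<n. j \<noteq> i \<longrightarrow> a j = 0"
  proof (intro allI impI)
    fix j assume "j < n" "j \<noteq> i"
    then show "a j = 0"
    proof (cases "i < j")
      case True then show ?thesis using two[rule_format, of i j] i \<open>j < n\<close> by auto
    next
      case False then have "j < i" using \<open>j \<noteq> i\<close> by simp
      then show ?thesis using two[rule_format, of j i] i by auto
    qed
  qed
  have ws: "wsum n (WT n lam) a = a i * WT n lam i" by (rule wsum_single[OF i(1) oth])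
  have L: "LL n lam = lam i * WT n lam i" using wt_mul[OF pos i(1)] by simp
  have wp: "WT n lam i > 0" using WT_pos i by simp
  have "1 * LL n lam \<le> d * LL n lam" using d1 by (intro mult_le_mono1) simp
  then have "LL n lam \<le> d * LL n lam" by simp
  then have "LL n lam \<le> a i * WT n lam i" using wa ws by linarith
  then have "lam i * WT n lam i \<le> a i * WT n lam i" using L by simp
  then have lai: "lam i \<le> a i" using wp by simp
  define u where "u = (ev i (lam i), 1::nat)"
  define w where "w = (a(i := a i - lam i), d - 1)"
  have uM: "u \<in> M_lambda n lam" unfolding u_def using M_iff[OF pos] fz_ev[OF i(1)] wsum_ev[OF i(1)] L by auto
  have "wsum n (WT n lam) (a(i := a i - lam i)) = (a(i := a i - lam i)) i * WT n lam i"
    by (rule wsum_single[OF i(1)]) (use oth in auto)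
  also have "\<dots> = (a i - lam i) * WT n lam i" by simp
  also have "\<dots> = a i * WT n lam i - LL n lam" using L by (simp add: diff_mult_distrib)
  finally have "(d - 1) * LL n lam \<le> wsum n (WT n lam) (a(i := a i - lam i))"
    using wa ws by (simp add: diff_mult_distrib)
  moreover have "fz n (a(i := a i - lam i))" using fa i unfolding fz_def by auto
  ultimately have wM: "w \<in> M_lambda n lam" unfolding w_def using M_iff[OF pos] by auto
  have "v = madd u w" unfolding v u_def w_def madd_def using lai d1
    by (auto simp: ev_def fun_eq_iff)
  moreover have "u \<noteq> mzero" "w \<noteq> mzero" unfolding u_def w_def mzero_def using d1 by auto
  ultimately show False using mg uM wM unfolding min_generator_def by blast
qed

end


context
  fixes n :: nat and lam :: "nat \<Rightarrow> nat"
  assumes pos: "\<forall>i<n. 0 < lam i"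
begin

lemma M_size:
  assumes "(x, e) \<in> M_lambda n lam" "(x, e) \<noteq> mzero"
  shows "0 < sum x {..<n} + e"
proof (cases "e = 0")
  case True
  then have "x \<noteq> (\<lambda>i. 0)" using assms(2) unfolding mzero_def by auto
  then obtain i where i: "x i \<noteq> 0" by auto
  have "fz n x" using assms(1) M_iff[OF pos] by auto
  then have "i < n" using i unfolding fz_def by (meson not_less)
  then have "x i \<le> sum x {..<n}" by (intro member_le_sum) auto
  then show ?thesis using i by simp
qed simp

lemma mg_le1:
  assumes H: "\<forall>v. min_generator n lam v \<and> (gen_type3 n v \<or> gen_type4 n v) \<longrightarrow> snd v = 1"
    and mg: "min_generator n lam v"
  shows "snd v \<le> 1"
proof (rule ccontr)
  assume "\<not> snd v \<le> 1"
  then have "snd v \<ge> 2" by simp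
  then have "gen_type3 n v \<or> gen_type4 n v" using classify[OF pos mg] by blast
  then have "snd v = 1" using H mg by blast
  then show False using \<open>snd v \<ge> 2\<close> by simp
qed

lemma decomp:
  assumes H: "\<forall>v. min_generator n lam v \<and> (gen_type3 n v \<or> gen_type4 n v) \<longrightarrow> snd v = 1"
  shows "(a, d) \<in> M_lambda n lam \<Longrightarrow> d \<ge> 1 \<Longrightarrow>
    \<exists>c. (\<forall>i. c i \<le> a i) \<and> (c, 1) \<in> M_lambda n lam \<and> (\<lambda>i. a i - c i, d - 1) \<in> M_lambda n lam"
proof (induction "sum a {..<n} + d" arbitrary: a d rule: less_induct)
  case less
  show ?case
  proof (cases "min_generator n lam (a, d)")
    case True
    then have "d = 1" using mg_le1[OF H True] less.prems by simp
    moreover have "((\<lambda>i. 0) :: nat \<Rightarrow> nat, 0::nat) \<in> M_lambda n lam"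
      using M_iff[OF pos] unfolding fz_def by simp
    ultimately show ?thesis using less.prems by (intro exI[of _ a]) auto
  next
    case False
    have "(a, d) \<noteq> mzero" using less.prems unfolding mzero_def by auto
    then obtain u w where uw: "u \<in> M_lambda n lam" "w \<in> M_lambda n lam" "u \<noteq> mzero" "w \<noteq> mzero"
      "(a, d) = madd u w" using False less.prems unfolding min_generator_def by blast
    obtain a1 d1 where u: "u = (a1, d1)" by (cases u)
    obtain a2 d2 where w: "w = (a2, d2)" by (cases w)
    have a: "a = (\<lambda>i. a1 i + a2 i)" and d: "d = d1 + d2" using uw(5) u w unfolding madd_def by auto
    have sa: "sum a {..<n} = sum a1 {..<n} + sum a2 {..<n}" unfolding a by (simp add: sum.distrib)
    have s1: "0 < sum a1 {..<n} + d1" using M_size uw u by blast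
    have s2: "0 < sum a2 {..<n} + d2" using M_size uw w by blast
    show ?thesis
    proof (cases "d1 \<ge> 1")
      case True
      have "sum a1 {..<n} + d1 < sum a {..<n} + d" using sa d s2 by linarith
      then obtain c where c: "\<forall>i. c i \<le> a1 i" "(c, 1) \<in> M_lambda n lam" "(\<lambda>i. a1 i - c i, d1 - 1) \<in> M_lambda n lam"
        using less.hyps[of a1 d1] uw(1) u True by blast
      have "(\<lambda>i. (a1 i - c i) + a2 i, (d1 - 1) + d2) \<in> M_lambda n lam"
        using M_add[OF pos c(3)] uw(2) w by blast
      moreover have "(\<lambda>i. (a1 i - c i) + a2 i) = (\<lambda>i. a i - c i)" "(d1 - 1) + d2 = d - 1"
        using c(1) True unfolding a d by (auto simp: fun_eq_iff)
      ultimately show ?thesis using c unfolding a by (intro exI[of _ c]) (auto simp: add.commute trans_le_add1)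
    next
      case False
      then have d1: "d1 = 0" by simp
      have "sum a2 {..<n} + d2 < sum a {..<n} + d" using sa d s1 by linarith
      moreover have "d2 \<ge> 1" using less.prems d d1 by simp
      ultimately obtain c where c: "\<forall>i. c i \<le> a2 i" "(c, 1) \<in> M_lambda n lam" "(\<lambda>i. a2 i - c i, d2 - 1) \<in> M_lambda n lam"
        using less.hyps[of a2 d2] uw(2) w by blast
      have "(\<lambda>i. a1 i + (a2 i - c i), d1 + (d2 - 1)) \<in> M_lambda n lam"
        using M_add[OF pos _ c(3)] uw(1) u by blast
      moreover have "(\<lambda>i. a1 i + (a2 i - c i)) = (\<lambda>i. a i - c i)" "d1 + (d2 - 1) = d - 1"
        using c(1) d1 unfolding a d by (auto simp: fun_eq_iff)
      ultimately show ?thesis using c unfolding a by (intro exI[of _ c]) (auto simp: trans_le_add2)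
    qed
  qed
qed

lemma mono_in_pow:
  assumes H: "\<forall>v. min_generator n lam v \<and> (gen_type3 n v \<or> gen_type4 n v) \<longrightarrow> snd v = 1"
  shows "\<forall>b. fz n b \<longrightarrow> k * LL n lam \<le> wsum n (WT n lam) b \<longrightarrow>
    (mon b :: ('k::field) mpoly) \<in> ideal_pow (polyring n) (I_lambda n lam) k"
proof (induction k)
  case 0 then show ?case using mon_R by auto
next
  case (Suc k)
  show ?case
  proof (intro allI impI)
    fix b assume b: "fz n b" "Suc k * LL n lam \<le> wsum n (WT n lam) b"
    then have "(b, Suc k) \<in> M_lambda n lam" using M_iff[OF pos] by auto
    then obtain c where c: "\<forall>i. c i \<le> b i" "(c, 1) \<in> M_lambda n lam" "(\<lambda>i. b i - c i, k) \<in> M_lambda n lam"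
      using decomp[OF H] by fastforce
    have fc: "fz n c" "LL n lam \<le> wsum n (WT n lam) c" using c(2) M_iff[OF pos] by auto
    have fr: "fz n (\<lambda>i. b i - c i)" "k * LL n lam \<le> wsum n (WT n lam) (\<lambda>i. b i - c i)"
      using c(3) M_iff[OF pos] by auto
    have m1: "(mon (\<lambda>i. b i - c i) :: 'k mpoly) \<in> ideal_pow (polyring n) (I_lambda n lam) k"
      using Suc.IH fr by blast
    have m2: "(mon c :: 'k mpoly) \<in> I_lambda n lam" using lemA[OF pos fc] .
    have "(\<lambda>i. (b i - c i) + c i) = b" using c(1) by (auto simp: fun_eq_iff)
    then have "mon (\<lambda>i. b i - c i) * mon c = (mon b :: 'k mpoly)" using mon_mult[OF fr(1) fc(1)] by simp
    then show "(mon b :: 'k mpoly) \<in> ideal_pow (polyring n) (I_lambda n lam) (Suc k)"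
      using pow_mult[OF subr_poly m1 m2] by simp
  qed
qed

lemma dir2:
  assumes H: "\<forall>v. min_generator n lam v \<and> (gen_type3 n v \<or> gen_type4 n v) \<longrightarrow> snd v = 1"
  shows "normal_ideal (polyring n) (I_lambda n lam :: ('k::field) mpoly set)"
  unfolding normal_ideal_def
proof (intro allI impI)
  fix k :: nat assume k: "k \<ge> 1"
  let ?R = "polyring n :: 'k mpoly set"
  let ?I = "I_lambda n lam :: 'k mpoly set"
  let ?Ik = "ideal_pow ?R ?I k"
  have idl: "idl ?R ?Ik" using idl_pow[OF subr_poly I_R[OF pos]] .
  then have IkR: "?Ik \<subseteq> ?R" unfolding idl_def by blast
  show "integral_closure ?R ?Ik = ?Ik"
  proof
    show "integral_closure ?R ?Ik \<subseteq> ?Ik"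
    proof
      fix r assume "r \<in> integral_closure ?R ?Ik"
      moreover have "?Ik \<subseteq> Pw n (WT n lam) (k * LL n lam)" using pow_Pw[OF I_Pw[OF pos]] .
      ultimately have r: "r \<in> Pw n (WT n lam) (k * LL n lam)" using closure_Pw by blast
      have "\<forall>b\<in>ks r. Poly_Mapping.single b (lk r b) \<in> ?Ik"
      proof
        fix b assume b: "b \<in> ks r"
        have rR: "r \<in> ?R" using r unfolding Pw_def by blast
        have "fz n (lk b)" using fz_key[OF rR b] .
        moreover have "k * LL n lam \<le> wsum n (WT n lam) (lk b)" using r b unfolding Pw_def by blast
        ultimately have "(mon (lk b) :: 'k mpoly) \<in> ?Ik" using mono_in_pow[OF H] by blast
        moreover have "Poly_Mapping.single 0 (lk r b) \<in> ?R" unfolding polyring_def by simp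
        ultimately have "Poly_Mapping.single 0 (lk r b) * mon (lk b) \<in> ?Ik" using idl unfolding idl_def by blast
        then show "Poly_Mapping.single b (lk r b) \<in> ?Ik" by (simp add: mon_lk mult_single)
      qed
      then have "(\<Sum>b\<in>ks r. Poly_Mapping.single b (lk r b)) \<in> ?Ik" by (intro idl_sum[OF idl]) (auto simp: finite_keys)
      then show "r \<in> ?Ik" using poly_expand[of r] by simp
    qed
  next
    show "?Ik \<subseteq> integral_closure ?R ?Ik"
    proof
      fix r assume r: "r \<in> ?Ik"
      have one: "(1::'k mpoly) \<in> ideal_pow ?R ?Ik 0" unfolding polyring_def by simp
      have "1 * r \<in> ideal_pow ?R ?Ik (Suc 0)" by (rule pow_mult[OF subr_poly one r])
      then show "r \<in> integral_closure ?R ?Ik" using integ[OF IkR, of r 1] r IkR by auto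
    qed
  qed
qed

end


definition Pd :: "nat \<Rightarrow> (nat \<Rightarrow> nat) \<Rightarrow> nat \<Rightarrow> (nat \<Rightarrow> nat) \<Rightarrow> bool" where
  "Pd n lam k x \<longleftrightarrow> k = 0 \<or> (\<exists>c. (\<forall>i. c i \<le> x i) \<and> (c, 1) \<in> M_lambda n lam \<and> (\<lambda>i. x i - c i, k - 1) \<in> M_lambda n lam)"

definition Qd :: "nat \<Rightarrow> (nat \<Rightarrow> nat) \<Rightarrow> nat \<Rightarrow> ('k::field) mpoly set" where
  "Qd n lam k = {f \<in> polyring n. \<forall>b\<in>ks f. Pd n lam k (lk b)}"

context
  fixes n :: nat and lam :: "nat \<Rightarrow> nat"
  assumes pos: "\<forall>i<n. 0 < lam i"
begin

lemma Pd_mono: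
  assumes y: "fz n y" and x: "Pd n lam k x"
  shows "Pd n lam k (\<lambda>i. y i + x i)"
proof (cases "k = 0")
  case True then show ?thesis unfolding Pd_def by simp
next
  case False
  then obtain c where c: "\<forall>i. c i \<le> x i" "(c, 1) \<in> M_lambda n lam" "(\<lambda>i. x i - c i, k - 1) \<in> M_lambda n lam"
    using x unfolding Pd_def by blast
  have y0: "(y, 0) \<in> M_lambda n lam" using y M_iff[OF pos] by simp
  have "(\<lambda>i. y i + (x i - c i), 0 + (k - 1)) \<in> M_lambda n lam" using M_add[OF pos y0 c(3)] .
  moreover have "(\<lambda>i. y i + (x i - c i)) = (\<lambda>i. (y i + x i) - c i)" using c(1) by (auto simp: fun_eq_iff)
  ultimately show ?thesis unfolding Pd_def using c by (intro disjI2 exI[of _ c]) (auto simp: trans_le_add2)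
qed

lemma Pd_step:
  assumes x: "Pd n lam k x" and fx: "fz n x" and y: "(y, 1) \<in> M_lambda n lam"
  shows "Pd n lam (Suc k) (\<lambda>i. x i + y i)"
proof (cases "k = 0")
  case True
  have "(x, 0) \<in> M_lambda n lam" using fx M_iff[OF pos] by simp
  moreover have "(\<lambda>i. x i + y i - y i) = x" by auto
  ultimately show ?thesis unfolding Pd_def using y True by (intro disjI2 exI[of _ y]) auto
next
  case False
  then obtain c where c: "\<forall>i. c i \<le> x i" "(c, 1) \<in> M_lambda n lam" "(\<lambda>i. x i - c i, k - 1) \<in> M_lambda n lam"
    using x unfolding Pd_def by blast
  have "(\<lambda>i. (x i - c i) + y i, (k - 1) + 1) \<in> M_lambda n lam" using M_add[OF pos c(3) y] .
  moreover have "(\<lambda>i. (x i - c i) + y i) = (\<lambda>i. (x i + y i) - c i)" using c(1) by (auto simp: fun_eq_iff)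
  moreover have "(k - 1) + 1 = Suc k - 1" using False by simp
  ultimately show ?thesis unfolding Pd_def using c by (intro disjI2 exI[of _ c]) (auto simp: trans_le_add1)
qed

lemma idl_Qd: "idl (polyring n) (Qd n lam k :: ('k::field) mpoly set)"
  unfolding idl_def
proof (intro conjI ballI)
  show "Qd n lam k \<subseteq> (polyring n :: 'k mpoly set)" unfolding Qd_def by blast
  show "0 \<in> (Qd n lam k :: 'k mpoly set)" unfolding Qd_def polyring_def by simp
next
  fix x y :: "'k mpoly" assume "x \<in> Qd n lam k" "y \<in> Qd n lam k"
  then show "x + y \<in> Qd n lam k" using subr_poly keys_add[of x y] unfolding Qd_def subr_def by blast
next
  fix r x :: "'k mpoly" assume r: "r \<in> polyring n" and x: "x \<in> Qd n lam k"
  have "r * x \<in> polyring n" using r x subr_poly unfolding Qd_def subr_def by blast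
  moreover have "\<forall>b\<in>ks (r * x). Pd n lam k (lk b)"
  proof
    fix b assume "b \<in> ks (r * x)"
    then obtain b1 b2 where bb: "b = b1 + b2" "b1 \<in> ks r" "b2 \<in> ks x" using keys_mult[of r x] by blast
    have "Pd n lam k (\<lambda>i. lk b1 i + lk b2 i)"
      using Pd_mono[OF fz_key[OF r bb(2)]] x bb(3) unfolding Qd_def by blast
    moreover have "lk b = (\<lambda>i. lk b1 i + lk b2 i)" unfolding bb(1) by (rule ext) (simp add: lookup_add)
    ultimately show "Pd n lam k (lk b)" by simp
  qed
  ultimately show "r * x \<in> Qd n lam k" unfolding Qd_def by blast
qed

lemma pow_Qd: "ideal_pow (polyring n) (I_lambda n lam) k \<subseteq> (Qd n lam k :: ('k::field) mpoly set)"
proof (induction k)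
  case 0 then show ?case unfolding Qd_def Pd_def by auto
next
  case (Suc k)
  have "{a * b |a b. a \<in> ideal_pow (polyring n) (I_lambda n lam) k \<and> b \<in> I_lambda n lam} \<subseteq> (Qd n lam (Suc k) :: 'k mpoly set)"
  proof clarify
    fix x y :: "'k mpoly"
    assume x: "x \<in> ideal_pow (polyring n) (I_lambda n lam) k" and y: "y \<in> I_lambda n lam"
    have xQ: "x \<in> Qd n lam k" using Suc x by blast
    have xR: "x \<in> polyring n" using xQ unfolding Qd_def by blast
    have yP: "y \<in> Pw n (WT n lam) (LL n lam)" using I_Pw[OF pos] y by blast
    have yR: "y \<in> polyring n" using yP unfolding Pw_def by blast
    have "x * y \<in> polyring n" using xR yR subr_poly unfolding subr_def by blast
    moreover have "\<forall>b\<in>ks (x * y). Pd n lam (Suc k) (lk b)"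
    proof
      fix b assume "b \<in> ks (x * y)"
      then obtain b1 b2 where bb: "b = b1 + b2" "b1 \<in> ks x" "b2 \<in> ks y" using keys_mult[of x y] by blast
      have "(lk b2, 1) \<in> M_lambda n lam"
        using M_iff[OF pos] fz_key[OF yR bb(3)] yP bb(3) unfolding Pw_def by auto
      then have "Pd n lam (Suc k) (\<lambda>i. lk b1 i + lk b2 i)"
        using Pd_step[OF _ fz_key[OF xR bb(2)]] xQ bb(2) unfolding Qd_def by blast
      moreover have "lk b = (\<lambda>i. lk b1 i + lk b2 i)" unfolding bb(1) by (rule ext) (simp add: lookup_add)
      ultimately show "Pd n lam (Suc k) (lk b)" by simp
    qed
    ultimately show "x * y \<in> Qd n lam (Suc k)" unfolding Qd_def by blast
  qed
  then show ?case using gen_least[OF idl_Qd] by simp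
qed

lemma dir1:
  assumes N: "normal_ideal (polyring n) (I_lambda n lam :: ('k::field) mpoly set)"
  shows "\<forall>v. min_generator n lam v \<and> (gen_type3 n v \<or> gen_type4 n v) \<longrightarrow> snd v = 1"
proof (intro allI impI)
  fix v assume h: "min_generator n lam v \<and> (gen_type3 n v \<or> gen_type4 n v)"
  obtain a d where v: "v = (a, d)" by (cases v)
  have mg: "min_generator n lam (a, d)" using h v by simp
  have d0: "d > 0" using h v unfolding gen_type3_def gen_type4_def by auto
  show "snd v = 1"
  proof (rule ccontr)
    assume "snd v \<noteq> 1"
    then have d2: "d \<ge> 2" using d0 v by simp
    let ?R = "polyring n :: 'k mpoly set"
    let ?I = "I_lambda n lam :: 'k mpoly set"
    let ?L = "LL n lam"
    have vM: "(a, d) \<in> M_lambda n lam" using mg unfolding min_generator_def by blast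
    then have fa: "fz n a" and wa: "d * ?L \<le> wsum n (WT n lam) a" using M_iff[OF pos] by auto
    have IR: "?I \<subseteq> ?R" using I_R[OF pos] .
    have genI: "\<forall>i<n. (mon (ev i (lam i)) :: 'k mpoly) \<in> ?I"
    proof (intro allI impI)
      fix i assume i: "i < n"
      show "(mon (ev i (lam i)) :: 'k mpoly) \<in> ?I"
        by (rule lemA[OF pos fz_ev[OF i]]) (simp add: wsum_ev[OF i] wt_mul[OF pos i])
    qed
    have genId: "\<forall>i<n. (mon (ev i (d * lam i)) :: 'k mpoly) \<in> ideal_pow ?R ?I d"
    proof (intro allI impI)
      fix i assume i: "i < n"
      have D: "\<forall>b q. fz n b \<longrightarrow> (\<forall>j<n. b j = q j * lam j) \<longrightarrow> d \<le> (\<Sum>j<n. q j) \<longrightarrow>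
           (mon b :: 'k mpoly) \<in> ideal_pow ?R ?I d" by (rule lemD[OF genI])
      have "(\<Sum>j<n. ev i d j) = d"
      proof -
        have "(\<Sum>j<n. ev i d j) = (\<Sum>j<n. if j = i then d else 0)" unfolding ev_def by (rule sum.cong) auto
        then show ?thesis using i by simp
      qed
      moreover have "\<forall>j<n. ev i (d * lam i) j = ev i d j * lam j" unfolding ev_def by auto
      ultimately show "(mon (ev i (d * lam i)) :: 'k mpoly) \<in> ideal_pow ?R ?I d"
        using D[rule_format, of "ev i (d * lam i)" "ev i d"] fz_ev[OF i] by simp
    qed
    have D2: "\<forall>b q. fz n b \<longrightarrow> (\<forall>j<n. b j = q j * (d * lam j)) \<longrightarrow> d * ?L \<le> (\<Sum>j<n. q j) \<longrightarrow>
           (mon b :: 'k mpoly) \<in> ideal_pow ?R (ideal_pow ?R ?I d) (d * ?L)"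
      by (rule lemD) (use genId in blast)
    have f1: "fz n (\<lambda>i. (d * ?L) * a i)" using fa unfolding fz_def by auto
    have f2: "\<forall>j<n. (d * ?L) * a j = (a j * WT n lam j) * (d * lam j)"
    proof (intro allI impI)
      fix j assume j: "j < n"
      have "(d * ?L) * a j = d * (lam j * WT n lam j) * a j" using wt_mul[OF pos j] by simp
      then show "(d * ?L) * a j = (a j * WT n lam j) * (d * lam j)" by (simp add: ac_simps)
    qed
    have f3: "d * ?L \<le> (\<Sum>j<n. a j * WT n lam j)" using wa unfolding wsum_def .
    have big: "(mon (\<lambda>i. (d * ?L) * a i) :: 'k mpoly) \<in> ideal_pow ?R (ideal_pow ?R ?I d) (d * ?L)"
      using D2[rule_format, of "\<lambda>i. (d * ?L) * a i" "\<lambda>j. a j * WT n lam j"] f1 f2 f3 by blast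
    have IdR: "ideal_pow ?R ?I d \<subseteq> ?R" using idl_pow[OF subr_poly IR] unfolding idl_def by blast
    have m1: "d * ?L \<ge> 1" using d0 LL_pos[OF pos] by simp
    have "(mon a :: 'k mpoly) \<in> integral_closure ?R (ideal_pow ?R ?I d)"
      by (rule integ[OF IdR mon_R[OF fa] m1]) (simp add: mon_pow[OF fa] big)
    then have inI: "(mon a :: 'k mpoly) \<in> ideal_pow ?R ?I d" using N d0 unfolding normal_ideal_def by auto
    then have "(mon a :: 'k mpoly) \<in> Qd n lam d" using pow_Qd by blast
    then have "Pd n lam d a" unfolding Qd_def using lk_pm[OF fa] by auto
    then obtain c where c: "\<forall>i. c i \<le> a i" "(c, 1) \<in> M_lambda n lam" "(\<lambda>i. a i - c i, d - 1) \<in> M_lambda n lam"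
      unfolding Pd_def using d0 by auto
    have "(a, d) = madd (c, 1) (\<lambda>i. a i - c i, d - 1)" unfolding madd_def using c(1) d0
      by (auto simp: fun_eq_iff)
    moreover have "(c, 1::nat) \<noteq> mzero" "(\<lambda>i. a i - c i, d - 1) \<noteq> mzero" unfolding mzero_def using d2 by auto
    ultimately show False using mg c unfolding min_generator_def by blast
  qed
qed

end

theorem lemma5p3:
  fixes n :: nat and lam :: "nat \<Rightarrow> nat"
  assumes "n \<ge> 1"
    and "\<forall>i<n. lam i > 0"
  shows "normal_ideal (polyring n) (I_lambda n lam :: ('k::field) mpoly set) \<longleftrightarrow>
    (\<forall>v. min_generator n lam v \<and> (gen_type3 n v \<or> gen_type4 n v) \<longrightarrow> snd v = 1)"
  using dir1[OF assms(2)] dir2[OF assms(2)] by blast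


end
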